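(* Let $X$ be a finite connected rack with $n$ elements, identified with $[n]=\{1,\dots,n\}$ via a fixed bijection, and let $\mathcal{M}$ be the set of maximal (proper) subracks of $X$. Then every $S\in\mathsf{Inf}(\mathcal{R}(X))$ satisfies $\eta(S)=S$, i.e. $\mathsf{Inf}(\mathcal{R}(X))\subseteq\eta(\mathcal{R}(X))$; consequently $\pi$ restricts to an isomorphism of posets between $\mathsf{Inf}(\mathcal{R}(X))$ and $\pi(\mathsf{Inf}(\mathcal{R}(X)))\subseteq\Pi_n$. Moreover, $\mathsf{Inf}(\mathcal{R}(X))$ is isomorphic to a subposet of $\mathsf{Inf}(\Pi_n,\pi(\mathcal{M}))$.
   Context: A rack is a set $X$ with a binary operation $\triangleright$ such that $a\triangleright(b\triangleright c)=(a\triangleright b)\triangleright(a\triangleright c)$ for all $a,b,c$, and each map $\phi_a\colon x\mapsto a\triangleright x$ is a bijection of $X$. Subracks are subsets closed under $\triangleright$ (including $\emptyset$); $\mathcal{R}(X)$ is the lattice of subracks ordered by inclusion, and $\overline{\mathcal{R}(X)}=\mathcal{R}(X)\setminus\{X,\emptyset\}$. $\mathsf{Inn}(X)=\langle\phi_a: a\in X\rangle$; $X$ is connected if $\mathsf{Inn}(X)$ acts transitively on $X$. For a subrack $S$, its orbit structure $\pi(S)$ is the partition of $X$ into the orbits of the group $\langle\phi_a: a\in S\rangle$; $\eta(S)$ is the largest subrack of $X$ having the same orbit structure as $S$. $\Pi_n$ is the lattice of set partitions of $[n]$ ordered by refinement. For a finite lattice $\mathcal{L}$ with proper part $\overline{\mathcal{L}}$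 (maximum and minimum removed) and $\mathcal{S}\subseteq\overline{\mathcal{L}}$, $\mathsf{Inf}(\mathcal{L},\mathcal{S})$ is the subposet of $\overline{\mathcal{L}}$ consisting of elements that are meets of sets of elements of $\mathcal{S}$; $\mathsf{Inf}(\mathcal{L})=\mathsf{Inf}(\mathcal{L},\text{coatoms of }\mathcal{L})$. *)

theory Defs
  imports Main
begin

text \<open>A rack: carrier X with operation op (op a b = a \<triangleright> b).\<close>
definition rack :: "'a set \<Rightarrow> ('a \<Rightarrow> 'a \<Rightarrow> 'a) \<Rightarrow> bool" where
  "rack X op \<longleftrightarrow>
     (\<forall>a\<in>X. \<forall>b\<in>X. op a b \<in> X) \<and>
     (\<forall>a\<in>X. \<forall>b\<in>X. \<forall>c\<in>X. op a (op b c) = op (op a b) (op a c)) \<and>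
     (\<forall>a\<in>X. bij_betw (op a) X X)"

text \<open>Subracks (including the empty one); the lattice R(X).\<close>
definition subracks :: "'a set \<Rightarrow> ('a \<Rightarrow> 'a \<Rightarrow> 'a) \<Rightarrow> 'a set set" where
  "subracks X op = {S. S \<subseteq> X \<and> (\<forall>a\<in>S. \<forall>b\<in>S. op a b \<in> S)}"

text \<open>Orbit of x under the group generated by the maps phi_a, a in S
  (closure under the generators and their inverses).\<close>
inductive_set orbit :: "'a set \<Rightarrow> ('a \<Rightarrow> 'a \<Rightarrow> 'a) \<Rightarrow> 'a set \<Rightarrow> 'a \<Rightarrow> 'a set"
  for X op S x where
  base: "x \<in> X \<Longrightarrow> x \<in> orbit X op S x"
| fwd: "y \<in> orbit X op S x \<Longrightarrow> a \<in> S \<Longrightarrow> op a y \<in> orbit X op S x"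
| bwd: "y \<in> orbit X op S x \<Longrightarrow> a \<in> S \<Longrightarrow> inv_into X (op a) y \<in> orbit X op S x"

text \<open>Connected: Inn(X) acts transitively on X.\<close>
definition rack_connected :: "'a set \<Rightarrow> ('a \<Rightarrow> 'a \<Rightarrow> 'a) \<Rightarrow> bool" where
  "rack_connected X op \<longleftrightarrow> (\<forall>x\<in>X. orbit X op X x = X)"

definition orbit_structure :: "'a set \<Rightarrow> ('a \<Rightarrow> 'a \<Rightarrow> 'a) \<Rightarrow> 'a set \<Rightarrow> 'a set set" where
  "orbit_structure X op S = (\<lambda>x. orbit X op S x) ` X"

definition eta :: "'a set \<Rightarrow> ('a \<Rightarrow> 'a \<Rightarrow> 'a) \<Rightarrow> 'a set \<Rightarrow> 'a set" where
  "eta X op S = (THE T. T \<in> subracks X op \<and> orbit_structure X op T = orbit_structure X op S \<and>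
      (\<forall>T'\<in>subracks X op. orbit_structure X op T' = orbit_structure X op S \<longrightarrow> T' \<subseteq> T))"

definition maximal_subracks :: "'a set \<Rightarrow> ('a \<Rightarrow> 'a \<Rightarrow> 'a) \<Rightarrow> 'a set set" where
  "maximal_subracks X op = {M \<in> subracks X op. M \<noteq> X \<and>
      (\<forall>T\<in>subracks X op. M \<subseteq> T \<longrightarrow> T = M \<or> T = X)}"

text \<open>Inf(R(X)): elements of the proper part of R(X) that are meets (intersections,
  the meet of the empty family being X) of sets of coatoms.\<close>
definition Inf_R :: "'a set \<Rightarrow> ('a \<Rightarrow> 'a \<Rightarrow> 'a) \<Rightarrow> 'a set set" where
  "Inf_R X op = {T \<in> subracks X op. T \<noteq> X \<and> T \<noteq> {} \<and>
      (\<exists>F\<subseteq>maximal_subracks X op. T = X \<inter> \<Inter>F)}"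

definition partitions :: "nat \<Rightarrow> nat set set set" where
  "partitions n = {P. (\<forall>B\<in>P. B \<noteq> {}) \<and> \<Union>P = {1..n} \<and>
      (\<forall>B\<in>P. \<forall>C\<in>P. B \<noteq> C \<longrightarrow> B \<inter> C = {})}"

definition refines :: "nat set set \<Rightarrow> nat set set \<Rightarrow> bool" where
  "refines P Q \<longleftrightarrow> (\<forall>B\<in>P. \<exists>C\<in>Q. B \<subseteq> C)"

definition part_meet :: "nat \<Rightarrow> nat set set set \<Rightarrow> nat set set" where
  "part_meet n F = (\<lambda>x. {y\<in>{1..n}. \<forall>P\<in>F. \<forall>B\<in>P. x \<in> B \<longleftrightarrow> y \<in> B}) ` {1..n}"

definition part_top :: "nat \<Rightarrow> nat set set" where
  "part_top n = {{1..n}}"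

definition part_bot :: "nat \<Rightarrow> nat set set" where
  "part_bot n = (\<lambda>i. {i}) ` {1..n}"

definition Inf_Pi :: "nat \<Rightarrow> nat set set set \<Rightarrow> nat set set set" where
  "Inf_Pi n S = {P \<in> partitions n. P \<noteq> part_top n \<and> P \<noteq> part_bot n \<and>
      (\<exists>F\<subseteq>S. P = part_meet n F)}"

definition pi_n :: "('a \<Rightarrow> nat) \<Rightarrow> 'a set \<Rightarrow> ('a \<Rightarrow> 'a \<Rightarrow> 'a) \<Rightarrow> 'a set \<Rightarrow> nat set set" where
  "pi_n f X op S = (\<lambda>B. f ` B) ` orbit_structure X op S"

end

theory Submission
  imports Defs
begin


lemma rack_closed: "rack X op \<Longrightarrow> a\<in>X \<Longrightarrow> b\<in>X \<Longrightarrow> op a b \<in> X"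
  unfolding rack_def by blast
lemma rack_dist: "rack X op \<Longrightarrow> a\<in>X \<Longrightarrow> b\<in>X \<Longrightarrow> c\<in>X \<Longrightarrow> op a (op b c) = op (op a b) (op a c)"
  unfolding rack_def by blast
lemma rack_inj: "rack X op \<Longrightarrow> a\<in>X \<Longrightarrow> inj_on (op a) X"
  unfolding rack_def bij_betw_def by blast
lemma rack_img: "rack X op \<Longrightarrow> a\<in>X \<Longrightarrow> op a ` X = X"
  unfolding rack_def bij_betw_def by blast
lemma rack_inv: "rack X op \<Longrightarrow> a\<in>X \<Longrightarrow> y\<in>X \<Longrightarrow> inv_into X (op a) y \<in> X \<and> op a (inv_into X (op a) y) = y"
  using rack_img[of X op a] by (metis inv_into_into f_inv_into_f)
lemma rack_inv2: "rack X op \<Longrightarrow> a\<in>X \<Longrightarrow> y\<in>X \<Longrightarrow> inv_into X (op a) (op a y) = y"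
  using rack_inj by (metis inv_into_f_f)

lemma O1: assumes "rack X op" "S \<subseteq> X" "y \<in> orbit X op S x" shows "y \<in> X"
  using assms(3) proof induct
  case base then show ?case by simp
next
  case (fwd y a)
  then have "a \<in> X" using assms(2) by blast
  then show ?case using rack_closed[OF assms(1)] fwd(2) by simp
next
  case (bwd y a)
  then have "a \<in> X" using assms(2) by blast
  then show ?case using rack_inv[OF assms(1)] bwd(2) by simp
qed

lemma O2: assumes "y \<in> orbit X op S x" "z \<in> orbit X op S y" shows "z \<in> orbit X op S x"
  using assms(2) proof induct
  case base then show ?case using assms(1) by simp
next
  case (fwd y a) from fwd(2,3) show ?case by (rule orbit.fwd)
next
  case (bwd y a) from bwd(2,3) show ?case by (rule orbit.bwd)
qed

lemma O3: assumes "rack X op" "S \<subseteq> X" "y \<in> orbit X op S x" shows "x \<in> orbit X op S y"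
  using assms(3) proof induct
  case base then show ?case by (simp add: orbit.base)
next
  case (fwd y a)
  have yX: "y \<in> X" using O1[OF assms(1,2) fwd(1)] .
  have aX: "a \<in> X" using fwd(3) assms(2) by blast
  have "op a y \<in> X" using rack_closed[OF assms(1) aX yX] .
  then have "op a y \<in> orbit X op S (op a y)" by (rule orbit.base)
  then have "inv_into X (op a) (op a y) \<in> orbit X op S (op a y)" using fwd(3) by (rule orbit.bwd)
  then have "y \<in> orbit X op S (op a y)" using rack_inv2[OF assms(1) aX yX] by simp
  from O2[OF this fwd(2)] show ?case .
next
  case (bwd y a)
  have yX: "y \<in> X" using O1[OF assms(1,2) bwd(1)] .
  have aX: "a \<in> X" using bwd(3) assms(2) by blast
  define w where "w = inv_into X (op a) y"
  have w: "w \<in> X" "op a w = y" using rack_inv[OF assms(1) aX yX] unfolding w_def by auto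
  have "w \<in> orbit X op S w" using w(1) by (rule orbit.base)
  then have "op a w \<in> orbit X op S w" using bwd(3) by (rule orbit.fwd)
  then have "y \<in> orbit X op S w" using w(2) by simp
  from O2[OF this bwd(2)] show ?case unfolding w_def .
qed

lemma O4: assumes "S \<subseteq> T" "y \<in> orbit X op S x" shows "y \<in> orbit X op T x"
  using assms(2) proof induct
  case base then show ?case by (rule orbit.base)
next
  case (fwd y a)
  have "a \<in> T" using fwd(3) assms(1) by blast
  with fwd(2) show ?case by (rule orbit.fwd)
next
  case (bwd y a)
  have "a \<in> T" using bwd(3) assms(1) by blast
  with bwd(2) show ?case by (rule orbit.bwd)
qed

lemma O6: assumes "rack X op" "S \<subseteq> X" "y \<in> orbit X op S x" shows "orbit X op S y = orbit X op S x"
proof (rule set_eqI, rule iffI)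
  fix z assume "z \<in> orbit X op S y" then show "z \<in> orbit X op S x" using O2[OF assms(3)] by simp
next
  fix z assume "z \<in> orbit X op S x" then show "z \<in> orbit X op S y" using O2[OF O3[OF assms]] by simp
qed

lemma O5: assumes "rack X op" "finite X" "S \<in> subracks X op" "s \<in> S" "y \<in> orbit X op S s" shows "y \<in> S"
  using assms(5) proof induct
  case base show ?case using assms(4) .
next
  case (fwd y a) then show ?case using assms(3) unfolding subracks_def by blast
next
  case (bwd y a)
  have SX: "S \<subseteq> X" and cl: "\<forall>a\<in>S. \<forall>b\<in>S. op a b \<in> S" using assms(3) unfolding subracks_def by auto
  have aX: "a \<in> X" using bwd(3) SX by blast
  have fin: "finite S" using SX assms(2) finite_subset by blast
  have inj: "inj_on (op a) S" using rack_inj[OF assms(1) aX] SX inj_on_subset by blast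
  have "op a ` S \<subseteq> S" using cl bwd(3) by blast
  then have "op a ` S = S" using endo_inj_surj fin inj by blast
  then have "y \<in> op a ` S" using bwd(2) by simp
  then obtain w where w: "w \<in> S" "y = op a w" by blast
  have "w \<in> X" using w SX by blast
  then have "inv_into X (op a) y = w" using w rack_inv2[OF assms(1) aX] by simp
  then show ?case using w by simp
qed



lemma OX: "rack X op \<Longrightarrow> S \<subseteq> X \<Longrightarrow> orbit X op S x \<subseteq> X"
  using O1[of X op S] by blast

lemma EM:
  assumes r: "rack X op" and fin: "finite X" and con: "rack_connected X op"
    and M: "M \<in> maximal_subracks X op" and m: "m \<in> M" and xX: "x \<in> X"
    and h: "\<forall>y\<in>X. op x y \<in> orbit X op M y"
  shows "x \<in> M"
proof -
  have Msub: "M \<in> subracks X op" and MX: "M \<noteq> X"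
    and maxi: "\<forall>T\<in>subracks X op. M \<subseteq> T \<longrightarrow> T = M \<or> T = X"
    using M unfolding maximal_subracks_def by auto
  have MsX: "M \<subseteq> X" using Msub unfolding subracks_def by auto
  define E where "E = {x\<in>X. \<forall>y\<in>X. op x y \<in> orbit X op M y}"
  have Esub: "E \<in> subracks X op"
    unfolding subracks_def
  proof (intro CollectI conjI ballI)
    show "E \<subseteq> X" unfolding E_def by auto
  next
    fix u v assume u: "u \<in> E" and v: "v \<in> E"
    have uX: "u \<in> X" and uE: "\<forall>y\<in>X. op u y \<in> orbit X op M y" using u unfolding E_def by auto
    have vX: "v \<in> X" and vE: "\<forall>y\<in>X. op v y \<in> orbit X op M y" using v unfolding E_def by auto
    have uvX: "op u v \<in> X" using rack_closed[OF r uX vX] .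
    have "\<forall>y\<in>X. op (op u v) y \<in> orbit X op M y"
    proof
      fix y assume yX: "y \<in> X"
      define w where "w = inv_into X (op u) y"
      have w: "w \<in> X" "op u w = y" using rack_inv[OF r uX yX] unfolding w_def by auto
      have h1: "op v w \<in> orbit X op M w" using vE w(1) by blast
      have vwX: "op v w \<in> X" using rack_closed[OF r vX w(1)] .
      have h2: "op u (op v w) \<in> orbit X op M (op v w)" using uE vwX by blast
      have h3: "orbit X op M (op v w) = orbit X op M w" using O6[OF r MsX h1] .
      have h4: "op (op u v) y = op u (op v w)" using rack_dist[OF r uX vX w(1)] w(2) by simp
      have h5: "y \<in> orbit X op M w" using uE w by blast
      have h6: "orbit X op M y = orbit X op M w" using O6[OF r MsX h5] .
      show "op (op u v) y \<in> orbit X op M y" using h2 h3 h4 h6 by simp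
    qed
    then show "op u v \<in> E" using uvX unfolding E_def by blast
  qed
  have ME: "M \<subseteq> E"
  proof
    fix a assume a: "a \<in> M"
    have "\<forall>y\<in>X. op a y \<in> orbit X op M y"
    proof
      fix y assume "y \<in> X"
      then have "y \<in> orbit X op M y" by (rule orbit.base)
      then show "op a y \<in> orbit X op M y" using a by (rule orbit.fwd)
    qed
    then show "a \<in> E" using a MsX unfolding E_def by blast
  qed
  have "E = M \<or> E = X" using maxi Esub ME by blast
  moreover have "E \<noteq> X"
  proof
    assume EX: "E = X"
    have mX: "m \<in> X" using m MsX by blast
    have "z \<in> orbit X op M m" if "z \<in> orbit X op X m" for z
      using that
    proof induct
      case base then show ?case by (rule orbit.base)
    next
      case (fwd z a)
      have zX: "z \<in> X" using O1[OF r _ fwd(1)] by simp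
      have "a \<in> E" using fwd(3) EX by simp
      then have "op a z \<in> orbit X op M z" using zX unfolding E_def by blast
      moreover have "orbit X op M z = orbit X op M m" using O6[OF r MsX fwd(2)] .
      ultimately show ?case by simp
    next
      case (bwd z a)
      have zX: "z \<in> X" using O1[OF r _ bwd(1)] by simp
      have aX: "a \<in> X" using bwd(3) by simp
      define w where "w = inv_into X (op a) z"
      have w: "w \<in> X" "op a w = z" using rack_inv[OF r aX zX] unfolding w_def by auto
      have "a \<in> E" using aX EX by simp
      then have "op a w \<in> orbit X op M w" using w(1) unfolding E_def by blast
      then have "z \<in> orbit X op M w" using w(2) by simp
      then have "w \<in> orbit X op M z" by (rule O3[OF r MsX])
      moreover have "orbit X op M z = orbit X op M m" using O6[OF r MsX bwd(2)] .
      ultimately show ?case unfolding w_def by simp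
    qed
    then have "orbit X op X m \<subseteq> orbit X op M m" by blast
    moreover have "orbit X op X m = X" using con mX unfolding rack_connected_def by blast
    moreover have "orbit X op M m \<subseteq> M" using O5[OF r fin Msub m] by blast
    ultimately have "X \<subseteq> M" by blast
    then show False using MX MsX by blast
  qed
  ultimately have "E = M" by blast
  moreover have "x \<in> E" using xX h unfolding E_def by blast
  ultimately show ?thesis by simp
qed

lemma TA:
  assumes r: "rack X op" and con: "rack_connected X op" and sX: "s \<in> X"
    and h: "\<forall>y\<in>X. op s y = y"
  shows "X = {s}"
proof -
  have A: "\<forall>y\<in>X. op z y = y" if "z \<in> orbit X op X s" for z
    using that
  proof induct
    case base then show ?case using h by blast
  next
    case (fwd z a)
    have zX: "z \<in> X" using O1[OF r _ fwd(1)] by simp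
    have aX: "a \<in> X" using fwd(3) by simp
    show ?case
    proof
      fix y assume yX: "y \<in> X"
      define w where "w = inv_into X (op a) y"
      have w: "w \<in> X" "op a w = y" using rack_inv[OF r aX yX] unfolding w_def by auto
      have "op (op a z) y = op (op a z) (op a w)" using w by simp
      also have "\<dots> = op a (op z w)" using rack_dist[OF r aX zX w(1)] by simp
      also have "\<dots> = op a w" using fwd(2) w(1) by simp
      finally show "op (op a z) y = y" using w(2) by simp
    qed
  next
    case (bwd z a)
    have zX: "z \<in> X" using O1[OF r _ bwd(1)] by simp
    have aX: "a \<in> X" using bwd(3) by simp
    define w where "w = inv_into X (op a) z"
    have w: "w \<in> X" "op a w = z" using rack_inv[OF r aX zX] unfolding w_def by auto
    have "\<forall>y\<in>X. op w y = y"
    proof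
      fix y assume yX: "y \<in> X"
      have ayX: "op a y \<in> X" using rack_closed[OF r aX yX] .
      have wyX: "op w y \<in> X" using rack_closed[OF r w(1) yX] .
      have "op a (op w y) = op (op a w) (op a y)" using rack_dist[OF r aX w(1) yX] .
      also have "\<dots> = op z (op a y)" using w(2) by simp
      also have "\<dots> = op a y" using bwd(2) ayX by simp
      finally have "op a (op w y) = op a y" .
      then show "op w y = y" using rack_inj[OF r aX] wyX yX unfolding inj_on_def by blast
    qed
    then show ?case unfolding w_def .
  qed
  have orbX: "orbit X op X s = X" using con sX unfolding rack_connected_def by blast
  have triv: "\<forall>y\<in>X. op x y = y" if "x \<in> X" for x using A[of x] that orbX by simp
  have "z = s" if "z \<in> orbit X op X s" for z
    using that
  proof induct
    case base then show ?case by simp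
  next
    case (fwd z a)
    have "a \<in> X" using fwd(3) by simp
    then show ?case using triv sX fwd(2) by simp
  next
    case (bwd z a)
    have aX: "a \<in> X" using bwd(3) by simp
    have "op a s = s" using triv aX sX by simp
    then have "inv_into X (op a) s = s" using rack_inv2[OF r aX sX] by simp
    then show ?case using bwd(2) by simp
  qed
  then show ?thesis using orbX sX by blast
qed

lemma K:
  assumes r: "rack X op" and fin: "finite X" and con: "rack_connected X op"
    and S: "S \<in> Inf_R X op" and TX: "T \<subseteq> X"
    and h: "\<forall>t\<in>T. \<forall>y\<in>X. op t y \<in> orbit X op S y"
  shows "T \<subseteq> S"
proof
  fix t assume t: "t \<in> T"
  obtain F where F: "F \<subseteq> maximal_subracks X op" "S = X \<inter> \<Inter>F"
    and Sne: "S \<noteq> {}" using S unfolding Inf_R_def by blast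
  obtain s where s: "s \<in> S" using Sne by blast
  have tX: "t \<in> X" using t TX by blast
  have "t \<in> M" if M: "M \<in> F" for M
  proof -
    have SM: "S \<subseteq> M" using F M by blast
    have "\<forall>y\<in>X. op t y \<in> orbit X op M y"
    proof
      fix y assume "y \<in> X"
      then have "op t y \<in> orbit X op S y" using h t by blast
      then show "op t y \<in> orbit X op M y" by (rule O4[OF SM])
    qed
    moreover have "s \<in> M" using SM s by blast
    moreover have "M \<in> maximal_subracks X op" using F M by blast
    ultimately show ?thesis using EM[OF r fin con _ _ tX] by blast
  qed
  then show "t \<in> S" using F tX by blast
qed



lemma img_sub: "inj_on f C \<Longrightarrow> A \<subseteq> C \<Longrightarrow> B \<subseteq> C \<Longrightarrow> f ` A \<subseteq> f ` B \<Longrightarrow> A \<subseteq> B"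
  unfolding inj_on_def by blast

definition pmR :: "nat set set set \<Rightarrow> nat \<Rightarrow> nat \<Rightarrow> bool" where
  "pmR G i j \<longleftrightarrow> (\<forall>P\<in>G. \<forall>B\<in>P. (i \<in> B \<longleftrightarrow> j \<in> B))"

lemma pm_eq: "part_meet n G = (\<lambda>x. {y\<in>{1..n}. pmR G x y}) ` {1..n}"
  unfolding part_meet_def pmR_def by simp

lemma pmR_refl: "pmR G i i" unfolding pmR_def by simp
lemma pmR_sym: "pmR G i j \<Longrightarrow> pmR G j i" unfolding pmR_def by simp
lemma pmR_trans: "pmR G i j \<Longrightarrow> pmR G j k \<Longrightarrow> pmR G i k" unfolding pmR_def by simp
lemma pmR_mono: "pmR G i j \<Longrightarrow> G' \<subseteq> G \<Longrightarrow> pmR G' i j" unfolding pmR_def by blast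

lemma PM1: "part_meet n G \<in> partitions n"
  unfolding partitions_def pm_eq
proof (intro CollectI conjI ballI impI)
  fix B assume "B \<in> (\<lambda>x. {y \<in> {1..n}. pmR G x y}) ` {1..n}"
  then obtain x where "x \<in> {1..n}" "B = {y \<in> {1..n}. pmR G x y}" by blast
  then show "B \<noteq> {}" using pmR_refl by blast
next
  show "\<Union>((\<lambda>x. {y \<in> {1..n}. pmR G x y}) ` {1..n}) = {1..n}"
    using pmR_refl by blast
next
  fix B C assume B: "B \<in> (\<lambda>x. {y \<in> {1..n}. pmR G x y}) ` {1..n}"
    and C: "C \<in> (\<lambda>x. {y \<in> {1..n}. pmR G x y}) ` {1..n}" and ne: "B \<noteq> C"
  obtain x where x: "B = {y \<in> {1..n}. pmR G x y}" using B by blast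
  obtain x' where x': "C = {y \<in> {1..n}. pmR G x' y}" using C by blast
  show "B \<inter> C = {}"
  proof (rule ccontr)
    assume "B \<inter> C \<noteq> {}"
    then obtain z where z: "pmR G x z" "pmR G x' z" using x x' by blast
    have "pmR G x y \<longleftrightarrow> pmR G x' y" for y
      using z pmR_trans pmR_sym by metis
    then have "B = C" using x x' by simp
    then show False using ne by simp
  qed
qed

lemma PM2: "refines (part_meet n G1) (part_meet n G2) \<longleftrightarrow>
   (\<forall>i\<in>{1..n}. \<forall>j\<in>{1..n}. pmR G1 i j \<longrightarrow> pmR G2 i j)"
proof
  assume h: "refines (part_meet n G1) (part_meet n G2)"
  show "\<forall>i\<in>{1..n}. \<forall>j\<in>{1..n}. pmR G1 i j \<longrightarrow> pmR G2 i j"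
  proof (intro ballI impI)
    fix i j assume i: "i \<in> {1..n}" and j: "j \<in> {1..n}" and ij: "pmR G1 i j"
    have "{y\<in>{1..n}. pmR G1 i y} \<in> part_meet n G1" unfolding pm_eq using i by blast
    then obtain C where C: "C \<in> part_meet n G2" "{y\<in>{1..n}. pmR G1 i y} \<subseteq> C"
      using h unfolding refines_def by blast
    obtain k where k: "C = {y\<in>{1..n}. pmR G2 k y}" using C(1) unfolding pm_eq by blast
    have "i \<in> C" using C(2) i pmR_refl by blast
    moreover have "j \<in> C" using C(2) j ij by blast
    ultimately have "pmR G2 k i" "pmR G2 k j" using k by auto
    then show "pmR G2 i j" using pmR_sym pmR_trans by metis
  qed
next
  assume h: "\<forall>i\<in>{1..n}. \<forall>j\<in>{1..n}. pmR G1 i j \<longrightarrow> pmR G2 i j"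
  show "refines (part_meet n G1) (part_meet n G2)"
    unfolding refines_def
  proof
    fix B assume "B \<in> part_meet n G1"
    then obtain i where i: "i \<in> {1..n}" "B = {y\<in>{1..n}. pmR G1 i y}" unfolding pm_eq by blast
    have "{y\<in>{1..n}. pmR G2 i y} \<in> part_meet n G2" unfolding pm_eq using i by blast
    moreover have "B \<subseteq> {y\<in>{1..n}. pmR G2 i y}" using i h by blast
    ultimately show "\<exists>C\<in>part_meet n G2. B \<subseteq> C" by blast
  qed
qed

lemma PMtop: "part_meet n G = part_top n \<Longrightarrow> i \<in> {1..n} \<Longrightarrow> j \<in> {1..n} \<Longrightarrow> pmR G i j"
proof -
  assume e: "part_meet n G = part_top n" and i: "i \<in> {1..n}" and j: "j \<in> {1..n}"
  have "{y\<in>{1..n}. pmR G i y} \<in> part_meet n G" unfolding pm_eq using i by blast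
  then have "{y\<in>{1..n}. pmR G i y} = {1..n}" using e unfolding part_top_def by simp
  then show "pmR G i j" using j by blast
qed

lemma PMbot: "part_meet n G = part_bot n \<Longrightarrow> i \<in> {1..n} \<Longrightarrow> j \<in> {1..n} \<Longrightarrow> pmR G i j \<Longrightarrow> i = j"
proof -
  assume e: "part_meet n G = part_bot n" and i: "i \<in> {1..n}" and j: "j \<in> {1..n}" and ij: "pmR G i j"
  have "{y\<in>{1..n}. pmR G i y} \<in> part_meet n G" unfolding pm_eq using i by blast
  then obtain k where k: "{y\<in>{1..n}. pmR G i y} = {k}" using e unfolding part_bot_def by blast
  have "i \<in> {k}" using k i pmR_refl by blast
  moreover have "j \<in> {k}" using k j ij by blast
  ultimately show "i = j" by simp
qed

lemma Rpi:
  assumes r: "rack X op" and inj: "inj_on f X" and FX: "\<forall>M\<in>F. M \<subseteq> X"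
    and x: "x \<in> X" and y: "y \<in> X"
  shows "pmR (pi_n f X op ` F) (f x) (f y) \<longleftrightarrow> (\<forall>M\<in>F. y \<in> orbit X op M x)"
proof
  assume h: "pmR (pi_n f X op ` F) (f x) (f y)"
  show "\<forall>M\<in>F. y \<in> orbit X op M x"
  proof
    fix M assume M: "M \<in> F"
    have MX: "M \<subseteq> X" using FX M by blast
    have "f ` orbit X op M x \<in> pi_n f X op M"
      unfolding pi_n_def orbit_structure_def using x by blast
    moreover have "pi_n f X op M \<in> pi_n f X op ` F" using M by blast
    ultimately have "f x \<in> f ` orbit X op M x \<longleftrightarrow> f y \<in> f ` orbit X op M x"
      using h unfolding pmR_def by blast
    moreover have "x \<in> orbit X op M x" using x by (rule orbit.base)
    ultimately have "f y \<in> f ` orbit X op M x" by blast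
    then show "y \<in> orbit X op M x" using inj_on_image_mem_iff[OF inj y OX[OF r MX]] by blast
  qed
next
  assume h: "\<forall>M\<in>F. y \<in> orbit X op M x"
  show "pmR (pi_n f X op ` F) (f x) (f y)"
    unfolding pmR_def
  proof (intro ballI)
    fix P B assume P: "P \<in> pi_n f X op ` F" and B: "B \<in> P"
    obtain M where M: "M \<in> F" "P = pi_n f X op M" using P by blast
    have MX: "M \<subseteq> X" using FX M by blast
    obtain z where z: "z \<in> X" "B = f ` orbit X op M z"
      using B M unfolding pi_n_def orbit_structure_def by blast
    have "y \<in> orbit X op M x" using h M by blast
    then have eq: "orbit X op M y = orbit X op M x" by (rule O6[OF r MX])
    have "x \<in> orbit X op M z \<longleftrightarrow> y \<in> orbit X op M z"
    proof
      assume "x \<in> orbit X op M z"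
      then have "orbit X op M x = orbit X op M z" by (rule O6[OF r MX])
      moreover have "y \<in> orbit X op M y" using y by (rule orbit.base)
      ultimately show "y \<in> orbit X op M z" using eq by simp
    next
      assume "y \<in> orbit X op M z"
      then have "orbit X op M y = orbit X op M z" by (rule O6[OF r MX])
      moreover have "x \<in> orbit X op M x" using x by (rule orbit.base)
      ultimately show "x \<in> orbit X op M z" using eq by simp
    qed
    then show "f x \<in> B \<longleftrightarrow> f y \<in> B"
      using z inj_on_image_mem_iff[OF inj x OX[OF r MX]] inj_on_image_mem_iff[OF inj y OX[OF r MX]]
      by simp
  qed
qed

lemma PN1:
  assumes r: "rack X op" and SX: "S \<subseteq> X" and bij: "bij_betw f X {1..n}"
  shows "pi_n f X op S \<in> partitions n"
proof -
  have inj: "inj_on f X" and img: "f ` X = {1..n}"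
    using bij_betw_imp_inj_on[OF bij] bij_betw_imp_surj_on[OF bij] by auto
  show ?thesis
    unfolding partitions_def
  proof (intro CollectI conjI ballI impI)
    fix B assume "B \<in> pi_n f X op S"
    then obtain y where "y \<in> X" "B = f ` orbit X op S y"
      unfolding pi_n_def orbit_structure_def by blast
    then show "B \<noteq> {}" using orbit.base[of y X op S] by blast
  next
    have "\<Union>(pi_n f X op S) = f ` (\<Union>y\<in>X. orbit X op S y)"
      unfolding pi_n_def orbit_structure_def by blast
    also have "(\<Union>y\<in>X. orbit X op S y) = X"
    proof
      show "(\<Union>y\<in>X. orbit X op S y) \<subseteq> X" using OX[OF r SX] by blast
      show "X \<subseteq> (\<Union>y\<in>X. orbit X op S y)"
      proof
        fix x assume "x \<in> X"
        then have "x \<in> orbit X op S x" by (rule orbit.base)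
        then show "x \<in> (\<Union>y\<in>X. orbit X op S y)" using \<open>x \<in> X\<close> by blast
      qed
    qed
    finally show "\<Union>(pi_n f X op S) = {1..n}" using img by simp
  next
    fix B C assume B: "B \<in> pi_n f X op S" and C: "C \<in> pi_n f X op S" and ne: "B \<noteq> C"
    obtain y where y: "y \<in> X" "B = f ` orbit X op S y"
      using B unfolding pi_n_def orbit_structure_def by blast
    obtain z where z: "z \<in> X" "C = f ` orbit X op S z"
      using C unfolding pi_n_def orbit_structure_def by blast
    show "B \<inter> C = {}"
    proof (rule ccontr)
      assume "B \<inter> C \<noteq> {}"
      then obtain u v where u: "u \<in> orbit X op S y" and v: "v \<in> orbit X op S z" and "f u = f v"
        using y z by blast
      moreover have "u \<in> X" "v \<in> X" using u v OX[OF r SX] by blast+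
      ultimately have "u = v" using inj unfolding inj_on_def by blast
      then have "orbit X op S y = orbit X op S z"
        using O6[OF r SX u] O6[OF r SX v] by simp
      then show False using ne y z by simp
    qed
  qed
qed

lemma PN2:
  assumes r: "rack X op" and SX: "S \<subseteq> X" and TX: "T \<subseteq> X" and inj: "inj_on f X"
  shows "refines (pi_n f X op S) (pi_n f X op T) \<longleftrightarrow> (\<forall>y\<in>X. orbit X op S y \<subseteq> orbit X op T y)"
proof
  assume h: "refines (pi_n f X op S) (pi_n f X op T)"
  show "\<forall>y\<in>X. orbit X op S y \<subseteq> orbit X op T y"
  proof
    fix y assume y: "y \<in> X"
    have "f ` orbit X op S y \<in> pi_n f X op S" unfolding pi_n_def orbit_structure_def using y by blast
    then obtain C where C: "C \<in> pi_n f X op T" "f ` orbit X op S y \<subseteq> C"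
      using h unfolding refines_def by blast
    obtain z where z: "z \<in> X" "C = f ` orbit X op T z"
      using C(1) unfolding pi_n_def orbit_structure_def by blast
    have sub: "orbit X op S y \<subseteq> orbit X op T z"
      using img_sub[OF inj OX[OF r SX] OX[OF r TX]] C(2) z(2) by blast
    have "y \<in> orbit X op S y" using y by (rule orbit.base)
    then have "y \<in> orbit X op T z" using sub by blast
    then have "orbit X op T y = orbit X op T z" by (rule O6[OF r TX])
    then show "orbit X op S y \<subseteq> orbit X op T y" using sub by simp
  qed
next
  assume h: "\<forall>y\<in>X. orbit X op S y \<subseteq> orbit X op T y"
  show "refines (pi_n f X op S) (pi_n f X op T)"
    unfolding refines_def
  proof
    fix B assume "B \<in> pi_n f X op S"
    then obtain y where y: "y \<in> X" "B = f ` orbit X op S y" unfolding pi_n_def orbit_structure_def by blast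
    have "f ` orbit X op T y \<in> pi_n f X op T" unfolding pi_n_def orbit_structure_def using y by blast
    moreover have "B \<subseteq> f ` orbit X op T y" using h y by blast
    ultimately show "\<exists>C\<in>pi_n f X op T. B \<subseteq> C" by blast
  qed
qed



lemma Inf_R_X: "S \<in> Inf_R X op \<Longrightarrow> S \<subseteq> X"
  unfolding Inf_R_def subracks_def by blast

lemma max_X: "M \<in> maximal_subracks X op \<Longrightarrow> M \<subseteq> X"
  unfolding maximal_subracks_def subracks_def by blast

lemma FS:
  assumes "S \<in> Inf_R X op"
  shows "S = X \<inter> \<Inter>{M\<in>maximal_subracks X op. S \<subseteq> M}"
    and "{M\<in>maximal_subracks X op. S \<subseteq> M} \<noteq> {}"
proof -
  obtain F where F: "F \<subseteq> maximal_subracks X op" "S = X \<inter> \<Inter>F" and SX: "S \<noteq> X"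
    using assms unfolding Inf_R_def by blast
  have "F \<subseteq> {M\<in>maximal_subracks X op. S \<subseteq> M}" using F by blast
  then have "X \<inter> \<Inter>{M\<in>maximal_subracks X op. S \<subseteq> M} \<subseteq> S" using F(2) by blast
  then show "S = X \<inter> \<Inter>{M\<in>maximal_subracks X op. S \<subseteq> M}" using Inf_R_X[OF assms] by blast
  have "F \<noteq> {}" using F(2) SX by auto
  then show "{M\<in>maximal_subracks X op. S \<subseteq> M} \<noteq> {}" using F by blast
qed

theorem mainTheorem4:
  fixes X :: "'a set" and op :: "'a \<Rightarrow> 'a \<Rightarrow> 'a" and n :: nat and f :: "'a \<Rightarrow> nat"
  assumes "finite X" and "rack X op" and "rack_connected X op"
    and "card X = n" and "bij_betw f X {1..n}"
  shows "(\<forall>S\<in>Inf_R X op. eta X op S = S)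
    \<and> pi_n f X op ` Inf_R X op \<subseteq> partitions n
    \<and> bij_betw (pi_n f X op) (Inf_R X op) (pi_n f X op ` Inf_R X op)
    \<and> (\<forall>S\<in>Inf_R X op. \<forall>T\<in>Inf_R X op.
          S \<subseteq> T \<longleftrightarrow> refines (pi_n f X op S) (pi_n f X op T))
    \<and> (\<exists>g. inj_on g (Inf_R X op)
          \<and> g ` Inf_R X op \<subseteq> Inf_Pi n (pi_n f X op ` maximal_subracks X op)
          \<and> (\<forall>S\<in>Inf_R X op. \<forall>T\<in>Inf_R X op. S \<subseteq> T \<longleftrightarrow> refines (g S) (g T)))"
proof -
  note fin = assms(1) and r = assms(2) and con = assms(3) and bij = assms(5)
  have inj: "inj_on f X" using bij_betw_imp_inj_on[OF bij] .
  have fX: "f ` X = {1..n}" using bij_betw_imp_surj_on[OF bij] .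
  have P1: "eta X op S = S" if S: "S \<in> Inf_R X op" for S
  proof -
    let ?P = "\<lambda>T. T \<in> subracks X op \<and> orbit_structure X op T = orbit_structure X op S \<and>
      (\<forall>T'\<in>subracks X op. orbit_structure X op T' = orbit_structure X op S \<longrightarrow> T' \<subseteq> T)"
    have SX: "S \<subseteq> X" using Inf_R_X[OF S] .
    have Ssub: "S \<in> subracks X op" using S unfolding Inf_R_def by blast
    have key: "T' \<subseteq> S" if T': "T' \<in> subracks X op" and eq: "orbit_structure X op T' = orbit_structure X op S" for T'
    proof -
      have T'X: "T' \<subseteq> X" using T' unfolding subracks_def by blast
      have "\<forall>t\<in>T'. \<forall>y\<in>X. op t y \<in> orbit X op S y"
      proof (intro ballI)
        fix t y assume t: "t \<in> T'" and y: "y \<in> X"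
        have "orbit X op T' y \<in> orbit_structure X op S" using eq y unfolding orbit_structure_def by blast
        then obtain z where z: "z \<in> X" "orbit X op T' y = orbit X op S z" unfolding orbit_structure_def by blast
        have "y \<in> orbit X op T' y" using y by (rule orbit.base)
        then have "y \<in> orbit X op S z" using z by simp
        then have e2: "orbit X op S y = orbit X op S z" by (rule O6[OF r SX])
        have "y \<in> orbit X op T' y" using y by (rule orbit.base)
        then have "op t y \<in> orbit X op T' y" using t by (rule orbit.fwd)
        then show "op t y \<in> orbit X op S y" using z e2 by simp
      qed
      then show ?thesis by (rule K[OF r fin con S T'X])
    qed
    have PS: "?P S" using Ssub key by blast
    have "T = S" if "?P T" for T
    proof -
      have "S \<subseteq> T" using that Ssub by auto
      moreover have "T \<subseteq> S" using that key by auto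
      ultimately show ?thesis by blast
    qed
    then show ?thesis unfolding eta_def using PS by (rule the_equality[rotated])
  qed
  have P2: "pi_n f X op ` Inf_R X op \<subseteq> partitions n"
  proof
    fix P assume "P \<in> pi_n f X op ` Inf_R X op"
    then obtain S where "S \<in> Inf_R X op" "P = pi_n f X op S" by blast
    then show "P \<in> partitions n" using PN1[OF r Inf_R_X bij] by simp
  qed
  have P4: "S \<subseteq> T \<longleftrightarrow> refines (pi_n f X op S) (pi_n f X op T)"
    if S: "S \<in> Inf_R X op" and T: "T \<in> Inf_R X op" for S T
  proof -
    have SX: "S \<subseteq> X" using Inf_R_X[OF S] .
    have TX: "T \<subseteq> X" using Inf_R_X[OF T] .
    show ?thesis
    proof
      assume "S \<subseteq> T"
      then have "\<forall>y\<in>X. orbit X op S y \<subseteq> orbit X op T y" using O4[where S=S and T=T] by blast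
      then show "refines (pi_n f X op S) (pi_n f X op T)" using PN2[OF r SX TX inj] by blast
    next
      assume "refines (pi_n f X op S) (pi_n f X op T)"
      then have h: "\<forall>y\<in>X. orbit X op S y \<subseteq> orbit X op T y" using PN2[OF r SX TX inj] by blast
      have "\<forall>s\<in>S. \<forall>y\<in>X. op s y \<in> orbit X op T y"
      proof (intro ballI)
        fix s y assume s: "s \<in> S" and y: "y \<in> X"
        have "y \<in> orbit X op S y" using y by (rule orbit.base)
        then have "op s y \<in> orbit X op S y" using s by (rule orbit.fwd)
        then show "op s y \<in> orbit X op T y" using h y by blast
      qed
      then show "S \<subseteq> T" by (rule K[OF r fin con T SX])
    qed
  qed
  have P3: "bij_betw (pi_n f X op) (Inf_R X op) (pi_n f X op ` Inf_R X op)"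
  proof -
    have "inj_on (pi_n f X op) (Inf_R X op)"
    proof (rule inj_onI)
      fix S T assume S: "S \<in> Inf_R X op" and T: "T \<in> Inf_R X op" and e: "pi_n f X op S = pi_n f X op T"
      have rr: "refines P P" for P unfolding refines_def by blast
      have "S \<subseteq> T" using P4[OF S T] e rr by simp
      moreover have "T \<subseteq> S" using P4[OF T S] e rr by simp
      ultimately show "S = T" by blast
    qed
    then show ?thesis unfolding bij_betw_def by blast
  qed
  define FS where "FS = (\<lambda>S. {M\<in>maximal_subracks X op. S \<subseteq> M})"
  define g where "g = (\<lambda>S. part_meet n (pi_n f X op ` FS S))"
  have FSX: "\<forall>M\<in>FS S. M \<subseteq> X" for S unfolding FS_def using max_X by blast
  have gR: "pmR (pi_n f X op ` FS S) (f x) (f y) \<longleftrightarrow> (\<forall>M\<in>FS S. y \<in> orbit X op M x)"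
    if "x \<in> X" "y \<in> X" for S x y using Rpi[OF r inj FSX that] .
  have act: "pmR (pi_n f X op ` FS S) (f y) (f (op s y))"
    if S: "S \<in> Inf_R X op" and s: "s \<in> S" and y: "y \<in> X" for S s y
  proof -
    have sX: "s \<in> X" using Inf_R_X[OF S] s by blast
    have syX: "op s y \<in> X" using rack_closed[OF r sX y] .
    have "\<forall>M\<in>FS S. op s y \<in> orbit X op M y"
    proof
      fix M assume "M \<in> FS S"
      then have "s \<in> M" using s unfolding FS_def by blast
      moreover have "y \<in> orbit X op M y" using y by (rule orbit.base)
      ultimately show "op s y \<in> orbit X op M y" by (rule orbit.fwd[rotated])
    qed
    then show ?thesis using gR[OF y syX] by blast
  qed
  have P5ord: "S \<subseteq> T \<longleftrightarrow> refines (g S) (g T)"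
    if S: "S \<in> Inf_R X op" and T: "T \<in> Inf_R X op" for S T
  proof
    assume ST: "S \<subseteq> T"
    have "pi_n f X op ` FS T \<subseteq> pi_n f X op ` FS S" using ST unfolding FS_def by blast
    then show "refines (g S) (g T)" unfolding g_def PM2 using pmR_mono[of "pi_n f X op ` FS S" _ _ "pi_n f X op ` FS T"] by blast
  next
    assume "refines (g S) (g T)"
    then have h: "\<forall>i\<in>{1..n}. \<forall>j\<in>{1..n}. pmR (pi_n f X op ` FS S) i j \<longrightarrow> pmR (pi_n f X op ` FS T) i j"
      unfolding g_def PM2 .
    show "S \<subseteq> T"
    proof
      fix x assume x: "x \<in> S"
      have xX: "x \<in> X" using Inf_R_X[OF S] x by blast
      have "x \<in> M" if M: "M \<in> FS T" for M
      proof -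
        have "\<forall>y\<in>X. op x y \<in> orbit X op M y"
        proof
          fix y assume y: "y \<in> X"
          have xyX: "op x y \<in> X" using rack_closed[OF r xX y] .
          have "pmR (pi_n f X op ` FS S) (f y) (f (op x y))" using act[OF S x y] .
          moreover have "f y \<in> {1..n}" "f (op x y) \<in> {1..n}" using fX y xyX by blast+
          ultimately have "pmR (pi_n f X op ` FS T) (f y) (f (op x y))" using h by blast
          then show "op x y \<in> orbit X op M y" using gR[OF y xyX] M by blast
        qed
        moreover have Mm: "M \<in> maximal_subracks X op" "T \<subseteq> M" using M unfolding FS_def by auto
        moreover obtain t where "t \<in> T" using T unfolding Inf_R_def by blast
        then have "t \<in> M" using Mm(2) by blast
        ultimately show ?thesis using EM[OF r fin con Mm(1) \<open>t \<in> M\<close> xX] by blast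
      qed
      then have "x \<in> X \<inter> \<Inter>(FS T)" using xX by blast
      then show "x \<in> T" using FS(1)[OF T] unfolding FS_def by blast
    qed
  qed
  have P5inj: "inj_on g (Inf_R X op)"
  proof (rule inj_onI)
    fix S T assume S: "S \<in> Inf_R X op" and T: "T \<in> Inf_R X op" and e: "g S = g T"
    have rr: "refines P P" for P unfolding refines_def by blast
    have "S \<subseteq> T" using P5ord[OF S T] e rr by simp
    moreover have "T \<subseteq> S" using P5ord[OF T S] e rr by simp
    ultimately show "S = T" by blast
  qed
  have P5img: "g S \<in> Inf_Pi n (pi_n f X op ` maximal_subracks X op)" if S: "S \<in> Inf_R X op" for S
  proof -
    have SX: "S \<subseteq> X" using Inf_R_X[OF S] .
    have Sne: "S \<noteq> {}" and SnX: "S \<noteq> X" using S unfolding Inf_R_def by auto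
    obtain s where s: "s \<in> S" using Sne by blast
    have sX: "s \<in> X" using s SX by blast
    have ntop: "g S \<noteq> part_top n"
    proof
      assume e: "g S = part_top n"
      obtain M where M: "M \<in> FS S" using FS(2)[OF S] unfolding FS_def by blast
      have Mm: "M \<in> maximal_subracks X op" "S \<subseteq> M" using M unfolding FS_def by auto
      have MX: "M \<subseteq> X" using max_X[OF Mm(1)] .
      have MnX: "M \<noteq> X" using Mm(1) unfolding maximal_subracks_def by blast
      obtain y where y: "y \<in> X" "y \<notin> M" using MX MnX by blast
      have "pmR (pi_n f X op ` FS S) (f s) (f y)"
        using PMtop[OF e[unfolded g_def], of "f s" "f y"] fX sX y(1) by blast
      then have "y \<in> orbit X op M s" using gR[OF sX y(1)] M by blast
      moreover have "M \<in> subracks X op" using Mm(1) unfolding maximal_subracks_def by blast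
      moreover have "s \<in> M" using Mm(2) s by blast
      ultimately have "y \<in> M" using O5[OF r fin \<open>M \<in> subracks X op\<close> \<open>s \<in> M\<close>] by blast
      then show False using y by blast
    qed
    have nbot: "g S \<noteq> part_bot n"
    proof
      assume e: "g S = part_bot n"
      have "\<forall>y\<in>X. op s y = y"
      proof
        fix y assume y: "y \<in> X"
        have syX: "op s y \<in> X" using rack_closed[OF r sX y] .
        have "f y = f (op s y)"
          using PMbot[OF e[unfolded g_def] _ _ act[OF S s y]] fX y syX by blast
        then show "op s y = y" using inj y syX unfolding inj_on_def by metis
      qed
      then have "X = {s}" by (rule TA[OF r con sX])
      then show False using SX s SnX by blast
    qed
    have "g S \<in> partitions n" unfolding g_def by (rule PM1)
    moreover have "pi_n f X op ` FS S \<subseteq> pi_n f X op ` maximal_subracks X op" unfolding FS_def by blast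
    ultimately show ?thesis using ntop nbot unfolding Inf_Pi_def g_def by blast
  qed
  have P5: "\<exists>g. inj_on g (Inf_R X op)
          \<and> g ` Inf_R X op \<subseteq> Inf_Pi n (pi_n f X op ` maximal_subracks X op)
          \<and> (\<forall>S\<in>Inf_R X op. \<forall>T\<in>Inf_R X op. S \<subseteq> T \<longleftrightarrow> refines (g S) (g T))"
    using P5inj P5img P5ord by blast
  have P1': "\<forall>S\<in>Inf_R X op. eta X op S = S" using P1 by blast
  have P4': "\<forall>S\<in>Inf_R X op. \<forall>T\<in>Inf_R X op.
          S \<subseteq> T \<longleftrightarrow> refines (pi_n f X op S) (pi_n f X op T)" using P4 by blast
  show ?thesis using P1' P2 P3 P4' P5 by (intro conjI)
qed

end
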